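(* Let $R$ be a semiring and $(X,\pi^X)$ an $R$-convex set. An equivalence relation $\sim$ on $X$ is a convex equivalence relation if and only if, for all $p,q\in D_R(X)$ with $p\sim_D q$, we have $\pi^X(p)\sim\pi^X(q)$.
   Context: A semiring is a set $R$ with commutative unital monoid structures $+$ (unit $0$) and $\cdot$ (unit $1$) with $\cdot$ distributing over $+$ and $0\cdot r=0$. $D_R(X)$ is the set of finitely supported $p:X\to R$ with $\sum_xp(x)=1$; $D_R$ is a monad on $\mathsf{Set}$ (pushforward on maps, multiplication $\mu(P)(x)=\sum_qP(q)q(x)$, unit Dirac delta). An $R$-convex set is a $D_R$-algebra $(X,\pi^X:D_R(X)\to X)$; write $\sum_i\alpha_ix_i$ for $\pi^X$ of the formal combination. $\Delta^n_R=D_R(\{0,\dots,n\})$. A convex relation on $X$ is a relation $\sim$ such that for any $\alpha\in\Delta^n_R$, if $x_i\sim y_i$ for all $i$ then $\sum_i\alpha_ix_i\sim\sum_i\alpha_iy_i$; a convex equivalence relation is a convex relation that is an equivalence relation. For an equivalence relation $\sim$ on $X$, $\sim_D$ is the relation on $D_R(X)$ with $p\sim_Dq$ iff $\sum_{y\in[x]}p(y)=\sum_{y\in[x]}q(y)$ for every equivalence class $[x]$. *)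

theory Defs
  imports Main
begin

text \<open>Semirings: commutative, unital, with 0 absorbing; 0 = 1 is allowed
  (we use the classes comm_semiring_0 and comm_monoid_mult, not comm_semiring_1).\<close>

definition supp :: "('x \<Rightarrow> 'r::zero) \<Rightarrow> 'x set" where
  "supp p = {x. p x \<noteq> 0}"

definition dist_set :: "('x \<Rightarrow> 'r::{comm_semiring_0,comm_monoid_mult}) set" where
  "dist_set = {p. finite (supp p) \<and> (\<Sum>x\<in>supp p. p x) = 1}"

definition dist_on :: "'x set \<Rightarrow> ('x \<Rightarrow> 'r::{comm_semiring_0,comm_monoid_mult}) set" where
  "dist_on A = {p \<in> dist_set. supp p \<subseteq> A}"

definition Dmap :: "('x \<Rightarrow> 'y) \<Rightarrow> ('x \<Rightarrow> 'r::{comm_semiring_0,comm_monoid_mult}) \<Rightarrow> 'y \<Rightarrow> 'r" where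
  "Dmap f p = (\<lambda>y. \<Sum>x\<in>{x\<in>supp p. f x = y}. p x)"

definition Dmu :: "(('x \<Rightarrow> 'r) \<Rightarrow> 'r) \<Rightarrow> 'x \<Rightarrow> 'r::{comm_semiring_0,comm_monoid_mult}" where
  "Dmu P = (\<lambda>x. \<Sum>q\<in>supp P. P q * q x)"

definition delta :: "'x \<Rightarrow> 'x \<Rightarrow> 'r::{comm_semiring_0,comm_monoid_mult}" where
  "delta x = (\<lambda>y. if y = x then 1 else 0)"

definition convex_algebra :: "(('x \<Rightarrow> 'r::{comm_semiring_0,comm_monoid_mult}) \<Rightarrow> 'x) \<Rightarrow> bool" where
  "convex_algebra \<pi> \<longleftrightarrow>
     (\<forall>x. \<pi> (delta x) = x) \<and>
     (\<forall>P \<in> dist_on (dist_set :: ('x \<Rightarrow> 'r) set). \<pi> (Dmu P) = \<pi> (Dmap \<pi> P))"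

definition convex_rel :: "(('x \<Rightarrow> 'r::{comm_semiring_0,comm_monoid_mult}) \<Rightarrow> 'x) \<Rightarrow> ('x \<times> 'x) set \<Rightarrow> bool" where
  "convex_rel \<pi> r \<longleftrightarrow>
     (\<forall>n::nat. \<forall>\<alpha> \<in> (dist_on {..n} :: (nat \<Rightarrow> 'r) set). \<forall>xs ys :: nat \<Rightarrow> 'x.
        (\<forall>i\<le>n. (xs i, ys i) \<in> r) \<longrightarrow> (\<pi> (Dmap xs \<alpha>), \<pi> (Dmap ys \<alpha>)) \<in> r)"

definition convex_equiv :: "(('x \<Rightarrow> 'r::{comm_semiring_0,comm_monoid_mult}) \<Rightarrow> 'x) \<Rightarrow> ('x \<times> 'x) set \<Rightarrow> bool" where
  "convex_equiv \<pi> r \<longleftrightarrow> convex_rel \<pi> r \<and> equiv UNIV r"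

definition lift_rel :: "('x \<times> 'x) set \<Rightarrow> ('x \<Rightarrow> 'r::{comm_semiring_0,comm_monoid_mult}) \<Rightarrow> ('x \<Rightarrow> 'r) \<Rightarrow> bool" where
  "lift_rel r p q \<longleftrightarrow>
     (\<forall>x. (\<Sum>y\<in>supp p \<inter> r `` {x}. p y) = (\<Sum>y\<in>supp q \<inter> r `` {x}. q y))"

end

theory Submission
  imports Defs
begin

lemma Dmap_sum_pre:
  fixes \<alpha> :: "'i \<Rightarrow> 'r::{comm_semiring_0,comm_monoid_mult}"
  assumes fin: "finite (supp \<alpha>)"
  shows "(\<Sum>y\<in>supp (Dmap f \<alpha>) \<inter> A. Dmap f \<alpha> y) = (\<Sum>i\<in>supp \<alpha> \<inter> f -` A. \<alpha> i)"
proof -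
  let ?S = "supp \<alpha>"
  have sub: "supp (Dmap f \<alpha>) \<inter> A \<subseteq> f ` ?S \<inter> A"
  proof
    fix y assume "y \<in> supp (Dmap f \<alpha>) \<inter> A"
    then have "Dmap f \<alpha> y \<noteq> 0" "y \<in> A" by (auto simp: supp_def)
    then have "{x\<in>?S. f x = y} \<noteq> {}" unfolding Dmap_def by (metis sum.empty)
    then show "y \<in> f ` ?S \<inter> A" using \<open>y \<in> A\<close> by blast
  qed
  have "(\<Sum>y\<in>supp (Dmap f \<alpha>) \<inter> A. Dmap f \<alpha> y) = (\<Sum>y\<in>f ` ?S \<inter> A. Dmap f \<alpha> y)"
    by (rule sum.mono_neutral_left) (use fin sub in \<open>auto simp: supp_def\<close>)
  also have "\<dots> = (\<Sum>y\<in>f ` (?S \<inter> f -` A). \<Sum>i\<in>{i\<in>?S \<inter> f -` A. f i = y}. \<alpha> i)"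
    unfolding Dmap_def
    apply (rule sum.cong)
     apply blast
    apply (rule sum.cong)
     apply auto
    done
  also have "\<dots> = (\<Sum>i\<in>?S \<inter> f -` A. \<alpha> i)"
    by (rule sum.image_gen[symmetric]) (use fin in auto)
  finally show ?thesis .
qed

lemma Dmap_finite:
  assumes fin: "finite (supp (\<alpha>::'i \<Rightarrow> 'r::{comm_semiring_0,comm_monoid_mult}))"
  shows "finite (supp (Dmap f \<alpha>))"
proof -
  have "supp (Dmap f \<alpha>) \<subseteq> f ` supp \<alpha>"
  proof
    fix y assume "y \<in> supp (Dmap f \<alpha>)"
    then have "Dmap f \<alpha> y \<noteq> 0" by (auto simp: supp_def)
    then have "{x\<in>supp \<alpha>. f x = y} \<noteq> {}" unfolding Dmap_def by (metis sum.empty)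
    then show "y \<in> f ` supp \<alpha>" by blast
  qed
  then show ?thesis using fin finite_subset by blast
qed

lemma Dmap_dist:
  assumes "\<alpha> \<in> (dist_set :: ('i \<Rightarrow> 'r::{comm_semiring_0,comm_monoid_mult}) set)"
  shows "Dmap f \<alpha> \<in> dist_set"
  using assms Dmap_sum_pre[of \<alpha> f UNIV] Dmap_finite[of \<alpha> f] by (simp add: dist_set_def)

lemma Dmap_comp:
  fixes \<alpha> :: "'i \<Rightarrow> 'r::{comm_semiring_0,comm_monoid_mult}"
  assumes fin: "finite (supp \<alpha>)"
  shows "Dmap g (Dmap f \<alpha>) = Dmap (g \<circ> f) \<alpha>"
proof
  fix z
  have "Dmap g (Dmap f \<alpha>) z = (\<Sum>y\<in>supp (Dmap f \<alpha>) \<inter> g -` {z}. Dmap f \<alpha> y)"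
    unfolding Dmap_def[of g] by (rule sum.cong) auto
  also have "\<dots> = (\<Sum>i\<in>supp \<alpha> \<inter> f -` g -` {z}. \<alpha> i)" by (rule Dmap_sum_pre[OF fin])
  also have "\<dots> = Dmap (g \<circ> f) \<alpha> z" unfolding Dmap_def by (rule sum.cong) auto
  finally show "Dmap g (Dmap f \<alpha>) z = Dmap (g \<circ> f) \<alpha> z" .
qed

lemma enum_dist:
  assumes "p \<in> (dist_set :: ('x \<Rightarrow> 'r::{comm_semiring_0,comm_monoid_mult}) set)"
  shows "\<exists>n (\<alpha>::nat \<Rightarrow> 'r) xs. \<alpha> \<in> dist_on {..n} \<and> Dmap xs \<alpha> = p"
proof -
  from assms have fin: "finite (supp p)" and s1: "(\<Sum>x\<in>supp p. p x) = 1" by (auto simp: dist_set_def)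
  obtain ys where ys: "distinct ys" "set ys = supp p" using finite_distinct_list[OF fin] by blast
  define n where "n = length ys"
  define \<alpha> :: "nat \<Rightarrow> 'r" where "\<alpha> i = (if i < n then p (ys ! i) else 0)" for i
  have suppa: "supp \<alpha> = {..<n}"
  proof (intro set_eqI iffI)
    fix i assume "i \<in> supp \<alpha>"
    then have "\<alpha> i \<noteq> 0" by (simp add: supp_def)
    then show "i \<in> {..<n}" unfolding \<alpha>_def by (cases "i < n") simp_all
  next
    fix i assume i: "i \<in> {..<n}"
    then have "ys ! i \<in> supp p" using ys(2) n_def by (metis lessThan_iff nth_mem)
    then have "p (ys ! i) \<noteq> 0" by (simp add: supp_def)
    then show "i \<in> supp \<alpha>" using i by (simp add: supp_def \<alpha>_def)
  qed
  have inj: "inj_on (nth ys) {..<n}" using ys(1) by (simp add: inj_on_nth n_def)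
  have img: "nth ys ` {..<n} = supp p" using ys(2) by (auto simp: n_def set_conv_nth)
  have "(\<Sum>i\<in>supp \<alpha>. \<alpha> i) = (\<Sum>i\<in>{..<n}. p (ys ! i))" using suppa by (simp add: \<alpha>_def)
  also have "\<dots> = (\<Sum>x\<in>supp p. p x)"
    using sum.reindex[OF inj, of p] img by simp
  finally have s2: "(\<Sum>i\<in>supp \<alpha>. \<alpha> i) = 1" using s1 by simp
  have f2: "finite (supp \<alpha>)" using suppa by simp
  have sb: "supp \<alpha> \<subseteq> {..n}"
  proof
    fix i assume "i \<in> supp \<alpha>"
    then have "i < n" using suppa by blast
    then show "i \<in> {..n}" by simp
  qed
  have "\<alpha> \<in> dist_on {..n}" unfolding dist_on_def dist_set_def using s2 f2 sb by blast
  moreover have "Dmap (nth ys) \<alpha> = p"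
  proof
    fix y
    show "Dmap (nth ys) \<alpha> y = p y"
    proof (cases "y \<in> set ys")
      case True
      then obtain k where k: "k < length ys" "ys ! k = y" by (metis in_set_conv_nth)
      have kn: "k < n" using k(1) n_def by simp
      have "{i\<in>supp \<alpha>. ys ! i = y} = {k}"
      proof (intro set_eqI iffI)
        fix i assume "i \<in> {i\<in>supp \<alpha>. ys ! i = y}"
        then have i: "i < length ys" "ys ! i = ys ! k" using suppa n_def k(2) by auto
        then show "i \<in> {k}" using nth_eq_iff_index_eq[OF ys(1) i(1) k(1)] by simp
      next
        fix i assume "i \<in> {k}"
        then show "i \<in> {i\<in>supp \<alpha>. ys ! i = y}" using suppa kn k(2) by simp
      qed
      then have "Dmap (nth ys) \<alpha> y = \<alpha> k" by (simp add: Dmap_def)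
      also have "\<dots> = p y" using kn k(2) by (simp add: \<alpha>_def)
      finally show ?thesis .
    next
      case False
      have "{i\<in>supp \<alpha>. ys ! i = y} = {}"
      proof (intro set_eqI iffI)
        fix i assume "i \<in> {i\<in>supp \<alpha>. ys ! i = y}"
        then have "i < length ys" "ys ! i = y" using suppa n_def by auto
        then show "i \<in> {}" using False nth_mem by metis
      qed simp
      moreover have "p y = 0" using False ys(2) by (auto simp: supp_def)
      moreover have "Dmap (nth ys) \<alpha> y = (\<Sum>i\<in>{i\<in>supp \<alpha>. ys ! i = y}. \<alpha> i)"
        by (simp only: Dmap_def)
      ultimately show ?thesis by (simp only: sum.empty)
    qed
  qed
  ultimately show ?thesis by blast
qed

theorem mainTheorem8:
  fixes \<pi> :: "('x \<Rightarrow> 'r::{comm_semiring_0,comm_monoid_mult}) \<Rightarrow> 'x"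
    and r :: "('x \<times> 'x) set"
  assumes "convex_algebra \<pi>"
    and "equiv UNIV r"
  shows "convex_equiv \<pi> r \<longleftrightarrow>
         (\<forall>p \<in> dist_set. \<forall>q \<in> dist_set. lift_rel r p q \<longrightarrow> (\<pi> p, \<pi> q) \<in> r)"
proof
  have eq: "equiv UNIV r" by fact
  have refl: "(x, x) \<in> r" for x using eq by (simp add: equiv_def refl_on_def)
  have sym: "(x, y) \<in> r \<Longrightarrow> (y, x) \<in> r" for x y using eq by (meson equivE symE)
  have trans: "(x, y) \<in> r \<Longrightarrow> (y, z) \<in> r \<Longrightarrow> (x, z) \<in> r" for x y z
    using eq by (meson equivE transE)
  {
    assume ce: "convex_equiv \<pi> r"
    then have cr: "convex_rel \<pi> r" by (simp add: convex_equiv_def)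
    define rep where "rep x = (SOME z. z \<in> r `` {x})" for x
    have rep_in: "(x, rep x) \<in> r" for x
      unfolding rep_def using refl by (metis (no_types) Image_singleton_iff someI)
    have rep_eq: "(x, y) \<in> r \<Longrightarrow> rep x = rep y" for x y
      unfolding rep_def using equiv_class_eq[OF eq] by metis
    have rep_iff: "rep x = rep y \<longleftrightarrow> (x, y) \<in> r" for x y
      using rep_eq rep_in sym trans by metis
    have step: "(\<pi> p, \<pi> (Dmap rep p)) \<in> r" if pd: "p \<in> dist_set" for p
    proof -
      obtain n and \<alpha> :: "nat \<Rightarrow> 'r" and xs where a: "\<alpha> \<in> dist_on {..n}" "Dmap xs \<alpha> = p"
        using enum_dist[OF pd] by blast
      have fin: "finite (supp \<alpha>)" using a(1) by (simp add: dist_on_def dist_set_def)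
      have "(\<pi> (Dmap xs \<alpha>), \<pi> (Dmap (rep \<circ> xs) \<alpha>)) \<in> r"
        using cr a(1) rep_in unfolding convex_rel_def by simp
      then show ?thesis using a(2) Dmap_comp[OF fin, of rep xs] by simp
    qed
    have "(\<pi> p, \<pi> q) \<in> r" if p: "p \<in> dist_set" and q: "q \<in> dist_set" and l: "lift_rel r p q" for p q
    proof -
      have "Dmap rep p = Dmap rep q"
      proof
        fix z
        have D: "Dmap rep s z = (\<Sum>y\<in>supp s \<inter> rep -` {z}. s y)" for s :: "'x \<Rightarrow> 'r"
          unfolding Dmap_def by (rule sum.cong) auto
        show "Dmap rep p z = Dmap rep q z"
        proof (cases "\<exists>y0. rep y0 = z")
          case True
          then obtain y0 where "rep y0 = z" by blast
          then have "rep -` {z} = r `` {y0}" using rep_iff sym by blast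
          then show ?thesis using l D by (simp add: lift_rel_def)
        next
          case False
          then have "rep -` {z} = {}" by blast
          then show ?thesis using D by simp
        qed
      qed
      then show ?thesis using step[OF p] step[OF q] sym trans by metis
    qed
  }
  then show "convex_equiv \<pi> r \<Longrightarrow> (\<forall>p \<in> dist_set. \<forall>q \<in> dist_set. lift_rel r p q \<longrightarrow> (\<pi> p, \<pi> q) \<in> r)"
    by blast
  assume H: "\<forall>p \<in> dist_set. \<forall>q \<in> dist_set. lift_rel r p q \<longrightarrow> (\<pi> p, \<pi> q) \<in> r"
  have "convex_rel \<pi> r"
    unfolding convex_rel_def
  proof (intro allI ballI impI)
    fix n and \<alpha> :: "nat \<Rightarrow> 'r" and xs ys :: "nat \<Rightarrow> 'x"
    assume a: "\<alpha> \<in> dist_on {..n}" and rel: "\<forall>i\<le>n. (xs i, ys i) \<in> r"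
    have ad: "\<alpha> \<in> dist_set" and sub: "supp \<alpha> \<subseteq> {..n}" using a by (auto simp: dist_on_def)
    have fin: "finite (supp \<alpha>)" using ad by (simp add: dist_set_def)
    have "lift_rel r (Dmap xs \<alpha>) (Dmap ys \<alpha>)"
      unfolding lift_rel_def
    proof
      fix x
      have "supp \<alpha> \<inter> xs -` (r `` {x}) = supp \<alpha> \<inter> ys -` (r `` {x})"
      proof (intro set_eqI)
        fix i
        show "i \<in> supp \<alpha> \<inter> xs -` (r `` {x}) \<longleftrightarrow> i \<in> supp \<alpha> \<inter> ys -` (r `` {x})"
        proof (cases "i \<in> supp \<alpha>")
          case True
          then have "i \<le> n" using sub by blast
          then have "(xs i, ys i) \<in> r" using rel by blast
          then have "(x, xs i) \<in> r \<longleftrightarrow> (x, ys i) \<in> r" using sym trans by blast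
          then show ?thesis by simp
        qed simp
      qed
      then show "(\<Sum>y\<in>supp (Dmap xs \<alpha>) \<inter> r `` {x}. Dmap xs \<alpha> y) =
                 (\<Sum>y\<in>supp (Dmap ys \<alpha>) \<inter> r `` {x}. Dmap ys \<alpha> y)"
        by (simp add: Dmap_sum_pre[OF fin])
    qed
    then show "(\<pi> (Dmap xs \<alpha>), \<pi> (Dmap ys \<alpha>)) \<in> r"
      using H Dmap_dist[OF ad] by blast
  qed
  then show "convex_equiv \<pi> r" using eq by (simp add: convex_equiv_def)
qed

end
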